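(* Let $S=(\mathcal{E},\Sigma,X,\mathcal{O})$ be an entity. Then $S$ is central atomic (i.e. for $(e,p),(f,q)\in\mathcal{E}\times\Sigma$, $O(e,p)\subseteq O(f,q)$ implies $(e,p)=(f,q)$) if and only if the central eigen closure operator $cl_{eig}$ on $\mathcal{E}\times\Sigma$ satisfies the $T_1$ separation axiom.
   Context: An entity $S=(\mathcal{E},\Sigma,X,\mathcal{O})$ consists of a set $\mathcal{E}$, a set $\Sigma$, and for each $e\in\mathcal{E}$, $p\in\Sigma$ a nonempty set $O(e,p)$, with $X=\bigcup_{e,p}O(e,p)$. The central eigen map $eig:\mathcal{P}(X)\to\mathcal{P}(\mathcal{E}\times\Sigma)$ is $(e,p)\in eig(A)\iff O(e,p)\subseteq A$; $\mathcal{Y}_{eig}=\{eig(A):A\subseteq X\}$ and $cl_{eig}(K)=\bigcap\{Y\in\mathcal{Y}_{eig}:K\subseteq Y\}$. A closure operator $cl$ on $W$ satisfies $T_1$ iff $cl(\{w\})=\{w\}$ for every $w\in W$. *)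

theory Defs
  imports Main
begin

text \<open>An entity S = (E, Sigma, X, Ob): sets E and Sigma, and for each e in E, p in Sigma
  a nonempty outcome set Ob e p; X is the union of all Ob e p.\<close>

definition entity :: "'e set \<Rightarrow> 'p set \<Rightarrow> ('e \<Rightarrow> 'p \<Rightarrow> 'x set) \<Rightarrow> bool" where
  "entity E Sig Ob \<longleftrightarrow> (\<forall>e\<in>E. \<forall>p\<in>Sig. Ob e p \<noteq> {})"

definition outcomes :: "'e set \<Rightarrow> 'p set \<Rightarrow> ('e \<Rightarrow> 'p \<Rightarrow> 'x set) \<Rightarrow> 'x set" where
  "outcomes E Sig Ob = (\<Union>e\<in>E. \<Union>p\<in>Sig. Ob e p)"

definition eig :: "'e set \<Rightarrow> 'p set \<Rightarrow> ('e \<Rightarrow> 'p \<Rightarrow> 'x set) \<Rightarrow> 'x set \<Rightarrow> ('e \<times> 'p) set" where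
  "eig E Sig Ob A = {(e, p) \<in> E \<times> Sig. Ob e p \<subseteq> A}"

definition eig_closed_sets :: "'e set \<Rightarrow> 'p set \<Rightarrow> ('e \<Rightarrow> 'p \<Rightarrow> 'x set) \<Rightarrow> ('e \<times> 'p) set set" where
  "eig_closed_sets E Sig Ob = {eig E Sig Ob A | A. A \<subseteq> outcomes E Sig Ob}"

definition cl_eig :: "'e set \<Rightarrow> 'p set \<Rightarrow> ('e \<Rightarrow> 'p \<Rightarrow> 'x set) \<Rightarrow> ('e \<times> 'p) set \<Rightarrow> ('e \<times> 'p) set" where
  "cl_eig E Sig Ob K = \<Inter>{Y \<in> eig_closed_sets E Sig Ob. K \<subseteq> Y}"

definition T1_closure :: "'w set \<Rightarrow> ('w set \<Rightarrow> 'w set) \<Rightarrow> bool" where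
  "T1_closure W cl \<longleftrightarrow> (\<forall>w\<in>W. cl {w} = {w})"

definition central_atomic :: "'e set \<Rightarrow> 'p set \<Rightarrow> ('e \<Rightarrow> 'p \<Rightarrow> 'x set) \<Rightarrow> bool" where
  "central_atomic E Sig Ob \<longleftrightarrow>
     (\<forall>e\<in>E. \<forall>p\<in>Sig. \<forall>f\<in>E. \<forall>q\<in>Sig. Ob e p \<subseteq> Ob f q \<longrightarrow> (e, p) = (f, q))"

end

theory Submission
  imports Defs
begin

lemma cl_single:
  assumes "e \<in> E" "p \<in> Sig"
  shows "cl_eig E Sig Ob {(e,p)} = eig E Sig Ob (Ob e p)"
proof
  have "Ob e p \<subseteq> outcomes E Sig Ob" using assms unfolding outcomes_def by blast
  hence "eig E Sig Ob (Ob e p) \<in> eig_closed_sets E Sig Ob" unfolding eig_closed_sets_def by blast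
  moreover have "{(e,p)} \<subseteq> eig E Sig Ob (Ob e p)" using assms unfolding eig_def by auto
  ultimately show "cl_eig E Sig Ob {(e,p)} \<subseteq> eig E Sig Ob (Ob e p)"
    unfolding cl_eig_def by blast
next
  show "eig E Sig Ob (Ob e p) \<subseteq> cl_eig E Sig Ob {(e,p)}"
    unfolding cl_eig_def eig_closed_sets_def eig_def by auto
qed

theorem mainTheorem4:
  fixes E :: "'e set" and Sig :: "'p set" and Ob :: "'e \<Rightarrow> 'p \<Rightarrow> 'x set"
  assumes "entity E Sig Ob"
  shows "central_atomic E Sig Ob \<longleftrightarrow> T1_closure (E \<times> Sig) (cl_eig E Sig Ob)"
proof -
  have "T1_closure (E \<times> Sig) (cl_eig E Sig Ob) \<longleftrightarrow>
        (\<forall>e\<in>E. \<forall>p\<in>Sig. eig E Sig Ob (Ob e p) = {(e,p)})"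
    unfolding T1_closure_def by (auto simp: cl_single)
  also have "\<dots> \<longleftrightarrow> central_atomic E Sig Ob"
    unfolding central_atomic_def eig_def by (auto simp: set_eq_iff)
  finally show ?thesis by simp
qed

end
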